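(* For formulas $S_1,S_2$, the equality $\emptyset[S_1,S_2]=\emptyset[S_2]$ holds if and only if at least one of the following holds: (1) $S_1$ is inconsistent; (2) $S_1$ is tautological; (3) $S_1$ is equivalent to $S_2$; (4) $S_1$ is equivalent to $\neg S_2$.
   Context: Propositional models are truth assignments over a finite set of variables; a formula used where a set of models is expected stands for its set of models. A doxastic state is a sequence $[C(0),\ldots,C(k)]$ of nonempty, pairwise disjoint sets of models covering all models. The flat doxastic state $\emptyset$ is $[\text{all models}]$. Lexicographic revision: $C\,\mathrm{lex}(A) = [C(0)\cap A,\ldots,C(k)\cap A, C(0)\setminus A,\ldots,C(k)\setminus A]$, empty sets discarded. $\emptyset[S_1,\ldots,S_m]$ denotes $\emptyset$ revised lexicographically by $S_1$, then $S_2$, ..., then $S_m$. *)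

theory Defs
  imports Main
begin

datatype 'v form =
    FVar 'v
  | FTrue
  | FFalse
  | FNot "'v form"
  | FAnd "'v form" "'v form"
  | FOr "'v form" "'v form"
  | FImp "'v form" "'v form"

type_synonym 'v model = "'v \<Rightarrow> bool"

fun holds :: "'v model \<Rightarrow> 'v form \<Rightarrow> bool" where
  "holds m (FVar x) = m x"
| "holds m FTrue = True"
| "holds m FFalse = False"
| "holds m (FNot f) = (\<not> holds m f)"
| "holds m (FAnd f g) = (holds m f \<and> holds m g)"
| "holds m (FOr f g) = (holds m f \<or> holds m g)"
| "holds m (FImp f g) = (holds m f \<longrightarrow> holds m g)"

definition mods :: "'v form \<Rightarrow> 'v model set" where
  "mods f = {m. holds m f}"

definition inconsistent :: "'v form \<Rightarrow> bool" where
  "inconsistent f \<longleftrightarrow> mods f = {}"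

definition tautological :: "'v form \<Rightarrow> bool" where
  "tautological f \<longleftrightarrow> mods f = UNIV"

definition equivalent :: "'v form \<Rightarrow> 'v form \<Rightarrow> bool" where
  "equivalent f g \<longleftrightarrow> mods f = mods g"

(* Doxastic states: sequences [C(0),...,C(k)] of sets of models *)
type_synonym 'v doxstate = "'v model set list"

definition flat :: "'v doxstate" where
  "flat = [UNIV]"

definition lex :: "'v doxstate \<Rightarrow> 'v model set \<Rightarrow> 'v doxstate" where
  "lex C A = filter (\<lambda>c. c \<noteq> {}) (map (\<lambda>c. c \<inter> A) C @ map (\<lambda>c. c - A) C)"

definition revs :: "'v form list \<Rightarrow> 'v doxstate" where
  "revs Ss = foldl (\<lambda>C S. lex C (mods S)) flat Ss"

end

theory Submission
  imports Defs
begin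

lemma key:
  fixes A B :: "'a set"
  shows "filter (\<lambda>c. c \<noteq> {}) [A \<inter> B, B - A, A - B, UNIV - A - B] = filter (\<lambda>c. c \<noteq> {}) [B, UNIV - B]
     \<longleftrightarrow> (A = {} \<or> A = UNIV \<or> A = B \<or> A = - B)"
  (is "?L = ?R \<longleftrightarrow> _")
proof (cases "A = {} \<or> A = UNIV \<or> A = B \<or> A = - B")
  case True
  then show ?thesis by (auto simp: Diff_eq Int_commute)
next
  case False
  then have a1: "A \<noteq> {}" "A \<noteq> UNIV" "A \<noteq> B" "A \<noteq> - B" by auto
  have "?L \<noteq> ?R"
  proof (cases "B = {}")
    case True
    then have "?L = [A, UNIV - A]" using a1 by auto
    moreover have "?R = [UNIV]" using True by simp
    ultimately show ?thesis by simp
  next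
    case bne: False
    show ?thesis
    proof (cases "B = UNIV")
      case True
      then have "?L = [A, UNIV - A]" using a1 by auto
      moreover have "?R = [UNIV]" using True by simp
      ultimately show ?thesis by simp
    next
      case False
      then have b: "UNIV - B \<noteq> {}" by auto
      have R: "?R = [B, UNIV - B]" using b bne by simp
      show ?thesis
      proof (cases "A \<inter> B = {}")
        case True
        then have e: "B - A = B" "A - B = A" by auto
        have "?L = B # A # filter (\<lambda>c. c \<noteq> {}) [UNIV - A - B]"
          using True e bne a1 by simp
        then show ?thesis using R a1 by (cases "UNIV - A - B = {}") auto
      next
        case f2: False
        show ?thesis
        proof (cases "B \<subseteq> A")
          case True
          then have e: "B - A = {}" "A \<inter> B = B" by auto
          have "A - B \<noteq> {}" using True a1 by auto
          then have "?L = B # (A - B) # filter (\<lambda>c. c \<noteq> {}) [UNIV - A - B]"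
            using e bne by simp
          moreover have "A - B \<noteq> UNIV - B" using a1 True by auto
          ultimately show ?thesis using R by simp
        next
          case False
          then have "A \<inter> B \<noteq> B" by auto
          moreover have "hd ?L = A \<inter> B" using f2 by simp
          ultimately show ?thesis using R by (metis list.sel(1))
        qed
      qed
    qed
  qed
  then show ?thesis using a1 by simp
qed

theorem mainTheorem8:
  fixes S1 S2 :: "('v::finite) form"
  shows "revs [S1, S2] = revs [S2] \<longleftrightarrow>
           (inconsistent S1 \<or> tautological S1 \<or> equivalent S1 S2 \<or> equivalent S1 (FNot S2))"
proof -
  have n: "mods (FNot S2) = - mods S2" by (auto simp: mods_def)
  have "revs [S1, S2] = filter (\<lambda>c. c \<noteq> {}) [mods S1 \<inter> mods S2, mods S2 - mods S1, mods S1 - mods S2, UNIV - mods S1 - mods S2]"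
    by (auto simp: revs_def lex_def flat_def Int_commute Diff_eq Int_assoc)
  moreover have "revs [S2] = filter (\<lambda>c. c \<noteq> {}) [mods S2, UNIV - mods S2]"
    by (simp add: revs_def lex_def flat_def)
  ultimately show ?thesis
    using key[of "mods S1" "mods S2"] n
    by (simp add: inconsistent_def tautological_def equivalent_def)
qed

end
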